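(* Let $G$ be a finite group and let $\chi$ be the character of an irreducible complex representation of $G$ of dimension $n$. Then for every $g\in G$, $$c(g)\le\frac12\Big(1+\frac{1}{n^3}\mathrm{Re}(\chi(g))\Big),$$ and in particular $$c(G)\le\frac12\Big(1+\frac1{n^2}\Big).$$
   Context: For $g\in G$, $c(g)=|\{(x,y)\in G\times G:[x,y]=g\}|/|G|^2$, and $c(G)=c(1)$ (the commuting probability). *)

theory Defs
  imports "HOL-Algebra.Group" "Jordan_Normal_Form.Matrix"
begin

definition representation :: "('g, 'b) monoid_scheme \<Rightarrow> nat \<Rightarrow> ('g \<Rightarrow> complex mat) \<Rightarrow> bool" where
  "representation G n \<rho> \<longleftrightarrow>
     (\<forall>g\<in>carrier G. \<rho> g \<in> carrier_mat n n) \<and>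
     \<rho> \<one>\<^bsub>G\<^esub> = 1\<^sub>m n \<and>
     (\<forall>g\<in>carrier G. \<forall>h\<in>carrier G. \<rho> (g \<otimes>\<^bsub>G\<^esub> h) = \<rho> g * \<rho> h)"

definition invariant_subspace :: "('g, 'b) monoid_scheme \<Rightarrow> nat \<Rightarrow> ('g \<Rightarrow> complex mat) \<Rightarrow> complex vec set \<Rightarrow> bool" where
  "invariant_subspace G n \<rho> W \<longleftrightarrow>
     W \<subseteq> carrier_vec n \<and> 0\<^sub>v n \<in> W \<and>
     (\<forall>v\<in>W. \<forall>w\<in>W. v + w \<in> W) \<and>
     (\<forall>a::complex. \<forall>v\<in>W. a \<cdot>\<^sub>v v \<in> W) \<and>
     (\<forall>g\<in>carrier G. \<forall>v\<in>W. \<rho> g *\<^sub>v v \<in> W)"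

definition irreducible_representation :: "('g, 'b) monoid_scheme \<Rightarrow> nat \<Rightarrow> ('g \<Rightarrow> complex mat) \<Rightarrow> bool" where
  "irreducible_representation G n \<rho> \<longleftrightarrow>
     representation G n \<rho> \<and> n > 0 \<and>
     (\<forall>W. invariant_subspace G n \<rho> W \<longrightarrow> W = {0\<^sub>v n} \<or> W = carrier_vec n)"

definition mat_trace :: "complex mat \<Rightarrow> complex" where
  "mat_trace A = (\<Sum>i<dim_row A. A $$ (i, i))"

definition character :: "('g \<Rightarrow> complex mat) \<Rightarrow> 'g \<Rightarrow> complex" where
  "character \<rho> g = mat_trace (\<rho> g)"

definition commutator :: "('g, 'b) monoid_scheme \<Rightarrow> 'g \<Rightarrow> 'g \<Rightarrow> 'g" where
  "commutator G x y = inv\<^bsub>G\<^esub> x \<otimes>\<^bsub>G\<^esub> inv\<^bsub>G\<^esub> y \<otimes>\<^bsub>G\<^esub> x \<otimes>\<^bsub>G\<^esub> y"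

definition comm_count :: "('g, 'b) monoid_scheme \<Rightarrow> 'g \<Rightarrow> real" where
  "comm_count G g = real (card {(x, y). x \<in> carrier G \<and> y \<in> carrier G \<and> commutator G x y = g})
                     / real (card (carrier G)) ^ 2"

definition comm_prob :: "('g, 'b) monoid_scheme \<Rightarrow> real" where
  "comm_prob G = comm_count G \<one>\<^bsub>G\<^esub>"

end

theory Submission imports Defs "Jordan_Normal_Form.Schur_Decomposition" "HOL-Algebra.Multiplicative_Group"
begin

lemma mult_entry:
  assumes "A \<in> carrier_mat n n" "B \<in> carrier_mat n n" "i < n" "j < n"
  shows "(A * B) $$ (i,j) = (\<Sum>k<n. A $$ (i,k) * B $$ (k,j))"
  using assms by (simp add: scalar_prod_def lessThan_atLeast0)

lemma mult_sq_carr[simp]: "A \<in> carrier_mat n n \<Longrightarrow> B \<in> carrier_mat n n \<Longrightarrow> A * B \<in> carrier_mat n n"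
  by auto

lemma mat_trace_alt: "A \<in> carrier_mat n n \<Longrightarrow> mat_trace A = (\<Sum>i<n. A $$ (i,i))"
  by (simp add: mat_trace_def)

lemma trace_comm:
  assumes "A \<in> carrier_mat n n" "B \<in> carrier_mat n n"
  shows "mat_trace (A * B) = mat_trace (B * A)"
proof -
  have AB: "A * B \<in> carrier_mat n n" "B * A \<in> carrier_mat n n" using assms by auto
  have "mat_trace (A * B) = (\<Sum>i<n. \<Sum>k<n. A $$ (i,k) * B $$ (k,i))"
    unfolding mat_trace_alt[OF AB(1)] using assms by (intro sum.cong refl mult_entry) auto
  also have "\<dots> = (\<Sum>k<n. \<Sum>i<n. B $$ (k,i) * A $$ (i,k))"
    by (subst sum.swap) (simp add: mult.commute)
  also have "\<dots> = mat_trace (B * A)"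
    unfolding mat_trace_alt[OF AB(2)] using assms by (intro sum.cong refl mult_entry[symmetric]) auto
  finally show ?thesis .
qed

lemma poly_linear_prod_root:
  fixes es :: "complex list"
  assumes "e \<in> set es"
  shows "poly (\<Prod>a\<leftarrow>es. [:- a, 1:]) e = 0"
  using assms by (induction es) auto

lemma trace_lower_gen:
  assumes A: "A \<in> carrier_mat n n" and eig: "\<And>e. eigenvalue A e \<Longrightarrow> cmod e = 1"
  shows "- real n \<le> Re (mat_trace A)"
proof -
  obtain es where es: "char_poly A = (\<Prod>a\<leftarrow>es. [:- a, 1:])" "length es = n"
    using char_poly_factorized[OF A] by blast
  obtain B P Q where sd: "schur_decomposition A es = (B,P,Q)" by (cases "schur_decomposition A es") auto
  have sd2: "similar_mat_wit A B P Q \<and> upper_triangular B \<and> diag_mat B = es"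
    by (rule schur_decomposition[OF A es(1) sd])
  have sim: "similar_mat_wit A B P Q" and dg: "diag_mat B = es" using sd2 by blast+
  note W = similar_mat_witD2[OF A sim]
  have Bc: "B \<in> carrier_mat n n" and Pc: "P \<in> carrier_mat n n" and Qc: "Q \<in> carrier_mat n n"
    and QP: "Q * P = 1\<^sub>m n" and AB: "A = P * B * Q" using W by blast+
  have t1: "mat_trace (P * B * Q) = mat_trace (Q * (P * B))"
    by (rule trace_comm[OF mult_carrier_mat[OF Pc Bc] Qc])
  have t2: "Q * (P * B) = B"
    using assoc_mult_mat[OF Qc Pc Bc, symmetric] QP left_mult_one_mat[OF Bc] by simp
  have tr: "mat_trace A = (\<Sum>i<n. B $$ (i,i))"
    unfolding AB t1 t2 by (rule mat_trace_alt[OF Bc])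
  have bnd: "Re (B $$ (i,i)) \<ge> -1" if i: "i < n" for i
  proof -
    have "es ! i = B $$ (i,i)" unfolding dg[symmetric] diag_mat_def using i Bc by simp
    hence "B $$ (i,i) \<in> set es" using es(2) i nth_mem[of i es] by simp
    hence "poly (char_poly A) (B $$ (i,i)) = 0" unfolding es(1) by (rule poly_linear_prod_root)
    hence "eigenvalue A (B $$ (i,i))" using eigenvalue_root_char_poly[OF A] by blast
    hence "cmod (B $$ (i,i)) = 1" by (rule eig)
    thus ?thesis using abs_Re_le_cmod[of "B $$ (i,i)"] by linarith
  qed
  have s1: "(\<Sum>i<n. Re (B $$ (i,i))) \<ge> (\<Sum>i<n. -1)" by (rule sum_mono) (simp add: bnd)
  have s2: "Re (mat_trace A) = (\<Sum>i<n. Re (B $$ (i,i)))"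
    unfolding tr by (rule Re_sum)
  have s3: "(\<Sum>i<n. -1::real) = - real n" by simp
  show ?thesis using s1 s2 s3 by linarith
qed

lemma sum_swap3:
  "(\<Sum>y\<in>A. \<Sum>i\<in>B. \<Sum>j\<in>C. f y i j) = (\<Sum>i\<in>B. \<Sum>j\<in>C. \<Sum>y\<in>A. f y i j)"
proof -
  have "(\<Sum>y\<in>A. \<Sum>i\<in>B. \<Sum>j\<in>C. f y i j) = (\<Sum>i\<in>B. \<Sum>y\<in>A. \<Sum>j\<in>C. f y i j)"
    by (rule sum.swap)
  also have "\<dots> = (\<Sum>i\<in>B. \<Sum>j\<in>C. \<Sum>y\<in>A. f y i j)"
    by (intro sum.cong refl) (rule sum.swap)
  finally show ?thesis .
qed

locale irrep = group G for G (structure) +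
  fixes n :: nat and \<rho> :: "'a \<Rightarrow> complex mat"
  assumes fin: "finite (carrier G)"
    and irr: "irreducible_representation G n \<rho>"
begin

lemma npos: "n > 0" using irr by (simp add: irreducible_representation_def)

lemma rep: "representation G n \<rho>" using irr by (simp add: irreducible_representation_def)

lemma rho_carr[simp]: "g \<in> carrier G \<Longrightarrow> \<rho> g \<in> carrier_mat n n"
  using rep by (simp add: representation_def)

lemma rho_one[simp]: "\<rho> \<one> = 1\<^sub>m n"
  using rep by (simp add: representation_def)

lemma rho_mult: "g \<in> carrier G \<Longrightarrow> h \<in> carrier G \<Longrightarrow> \<rho> (g \<otimes> h) = \<rho> g * \<rho> h"
  using rep by (simp add: representation_def)

lemma schur:
  assumes A: "A \<in> carrier_mat n n" and comm: "\<And>g. g \<in> carrier G \<Longrightarrow> A * \<rho> g = \<rho> g * A"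
  shows "\<exists>c. A = c \<cdot>\<^sub>m 1\<^sub>m n"
proof -
  obtain es where es: "char_poly A = (\<Prod>a\<leftarrow>es. [:- a, 1:])" "length es = n"
    using char_poly_factorized[OF A] by blast
  define e where "e = es ! 0"
  have "e \<in> set es" using es(2) npos unfolding e_def by simp
  hence "poly (char_poly A) e = 0" using es(1) poly_linear_prod_root by simp
  hence "eigenvalue A e" using eigenvalue_root_char_poly[OF A] by simp
  then obtain v where v: "eigenvector A v e" unfolding eigenvalue_def by blast
  have dA: "dim_row A = n" using A by simp
  define W where "W = {w \<in> carrier_vec n. A *\<^sub>v w = e \<cdot>\<^sub>v w}"
  have inv: "invariant_subspace G n \<rho> W"
    unfolding invariant_subspace_def
  proof (intro conjI ballI allI)
    show "W \<subseteq> carrier_vec n" unfolding W_def by auto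
    show "0\<^sub>v n \<in> W" unfolding W_def using A by auto
  next
    fix x y assume "x \<in> W" "y \<in> W"
    thus "x + y \<in> W" unfolding W_def using A
      by (auto simp: mult_add_distrib_mat_vec smult_add_distrib_vec)
  next
    fix a :: complex and x assume "x \<in> W"
    thus "a \<cdot>\<^sub>v x \<in> W" unfolding W_def using A
      by (auto simp: mult_mat_vec smult_smult_assoc mult.commute)
  next
    fix g x assume g: "g \<in> carrier G" and x: "x \<in> W"
    have xc: "x \<in> carrier_vec n" and Ax: "A *\<^sub>v x = e \<cdot>\<^sub>v x" using x unfolding W_def by auto
    have "A *\<^sub>v (\<rho> g *\<^sub>v x) = (A * \<rho> g) *\<^sub>v x" using assoc_mult_mat_vec[of A n n "\<rho> g" n x] A g xc by simp
    also have "\<dots> = (\<rho> g * A) *\<^sub>v x" using comm g by simp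
    also have "\<dots> = \<rho> g *\<^sub>v (e \<cdot>\<^sub>v x)" using assoc_mult_mat_vec[of "\<rho> g" n n A n x] A g xc Ax by simp
    also have "\<dots> = e \<cdot>\<^sub>v (\<rho> g *\<^sub>v x)" using g xc by (simp add: mult_mat_vec[of _ n n])
    finally show "\<rho> g *\<^sub>v x \<in> W" unfolding W_def using g xc mult_mat_vec_carrier[OF rho_carr[OF g] xc] by auto
  qed
  have "v \<in> W" "v \<noteq> 0\<^sub>v n" using v dA unfolding W_def eigenvector_def by auto
  hence "W \<noteq> {0\<^sub>v n}" by auto
  hence Wall: "W = carrier_vec n" using inv irr unfolding irreducible_representation_def by blast
  have "A = e \<cdot>\<^sub>m 1\<^sub>m n"
  proof (rule eq_matI)
    fix i j assume i: "i < dim_row (e \<cdot>\<^sub>m 1\<^sub>m n)" and j: "j < dim_col (e \<cdot>\<^sub>m 1\<^sub>m n)"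
    have "unit_vec n j \<in> W" using Wall by simp
    hence "A *\<^sub>v unit_vec n j = e \<cdot>\<^sub>v unit_vec n j" unfolding W_def by simp
    hence "(A *\<^sub>v unit_vec n j) $ i = (e \<cdot>\<^sub>v unit_vec n j) $ i" by simp
    thus "A $$ (i, j) = (e \<cdot>\<^sub>m 1\<^sub>m n) $$ (i, j)" using i j A by simp
  qed (use A in auto)
  thus ?thesis by blast
qed

lemma rho_inv_r: "x \<in> carrier G \<Longrightarrow> \<rho> x * \<rho> (inv x) = 1\<^sub>m n"
  using rho_mult[of x "inv x"] by simp

lemma rho_inv_l: "x \<in> carrier G \<Longrightarrow> \<rho> (inv x) * \<rho> x = 1\<^sub>m n"
  using rho_mult[of "inv x" x] by simp

lemma reindex_mult:
  assumes g: "g \<in> carrier G"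
  shows "(\<Sum>x\<in>carrier G. f (x \<otimes> g)) = (\<Sum>x\<in>carrier G. (f x :: 'c :: comm_monoid_add))"
  by (rule sum.reindex_bij_witness[where i = "\<lambda>x. x \<otimes> inv g" and j = "\<lambda>x. x \<otimes> g"])
     (use g in \<open>auto simp: m_assoc\<close>)

lemma avg:
  assumes B: "B \<in> carrier_mat n n" and k: "k < n" and j: "j < n"
  shows "(\<Sum>x\<in>carrier G. (\<rho> (inv x) * (B * \<rho> x)) $$ (k,j))
         = (if k = j then of_nat (card (carrier G)) * mat_trace B / of_nat n else 0)"
proof -
  define P where "P x = \<rho> (inv x) * (B * \<rho> x)" for x
  have Pc: "x \<in> carrier G \<Longrightarrow> P x \<in> carrier_mat n n" for x unfolding P_def using B by auto
  define M where "M = mat n n (\<lambda>(k,j). \<Sum>x\<in>carrier G. P x $$ (k,j))"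
  have Mc: "M \<in> carrier_mat n n" unfolding M_def by simp
  have PM: "P x * \<rho> g = \<rho> g * P (x \<otimes> g)" if x: "x \<in> carrier G" and g: "g \<in> carrier G" for x g
  proof -
    have "\<rho> g * \<rho> (inv (x \<otimes> g)) = \<rho> (inv x)"
      using x g by (simp add: rho_mult[symmetric] inv_mult_group m_assoc[symmetric])
    moreover have "\<rho> (x \<otimes> g) = \<rho> x * \<rho> g" using x g by (simp add: rho_mult)
    ultimately have "\<rho> g * P (x \<otimes> g) = \<rho> (inv x) * (B * (\<rho> x * \<rho> g))"
      unfolding P_def using x g B
      assoc_mult_mat[of "\<rho> g" n n "\<rho> (inv (x \<otimes> g))" n "B * \<rho> (x \<otimes> g)" n] by simp
    moreover have "P x * \<rho> g = \<rho> (inv x) * (B * (\<rho> x * \<rho> g))"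
      unfolding P_def using x g B
      assoc_mult_mat[of "\<rho> (inv x)" n n "B * \<rho> x" n "\<rho> g" n]
      assoc_mult_mat[of B n n "\<rho> x" n "\<rho> g" n] by simp
    ultimately show ?thesis by simp
  qed
  have comm: "M * \<rho> g = \<rho> g * M" if g: "g \<in> carrier G" for g
  proof (rule eq_matI)
    fix i j assume i: "i < dim_row (\<rho> g * M)" and j: "j < dim_col (\<rho> g * M)"
    hence i: "i < n" and j: "j < n" using rho_carr[OF g] Mc by auto
    have "(M * \<rho> g) $$ (i,j) = (\<Sum>k<n. (\<Sum>x\<in>carrier G. P x $$ (i,k)) * \<rho> g $$ (k,j))"
      using mult_entry[OF Mc rho_carr[OF g] i j] i by (simp add: M_def)
    also have "\<dots> = (\<Sum>x\<in>carrier G. (P x * \<rho> g) $$ (i,j))"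
      by (simp add: sum_distrib_right mult_entry[OF Pc rho_carr[OF g] i j] cong: sum.cong)
         (rule sum.swap)
    also have "\<dots> = (\<Sum>x\<in>carrier G. (\<rho> g * P (x \<otimes> g)) $$ (i,j))"
      using g by (intro sum.cong refl) (simp add: PM)
    also have "\<dots> = (\<Sum>x\<in>carrier G. (\<rho> g * P x) $$ (i,j))"
      using reindex_mult[OF g, of "\<lambda>y. (\<rho> g * P y) $$ (i,j)"] by simp
    also have "\<dots> = (\<Sum>k<n. \<rho> g $$ (i,k) * (\<Sum>x\<in>carrier G. P x $$ (k,j)))"
      by (simp add: sum_distrib_left mult_entry[OF rho_carr[OF g] Pc i j] cong: sum.cong)
         (rule sum.swap)
    also have "\<dots> = (\<rho> g * M) $$ (i,j)"
      using mult_entry[OF rho_carr[OF g] Mc i j] j by (simp add: M_def)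
    finally show "(M * \<rho> g) $$ (i,j) = (\<rho> g * M) $$ (i,j)" .
  qed (use rho_carr[OF g] Mc in auto)
  obtain c where Mcc: "M = c \<cdot>\<^sub>m 1\<^sub>m n" using schur[OF Mc comm] by blast
  have trP: "mat_trace (P x) = mat_trace B" if x: "x \<in> carrier G" for x
  proof -
    have "mat_trace (P x) = mat_trace ((B * \<rho> x) * \<rho> (inv x))"
      unfolding P_def using x B by (intro trace_comm[of _ n]) auto
    also have "(B * \<rho> x) * \<rho> (inv x) = B"
      using x B assoc_mult_mat[of B n n "\<rho> x" n "\<rho> (inv x)" n] by (simp add: rho_inv_r)
    finally show ?thesis .
  qed
  have "mat_trace M = (\<Sum>i<n. \<Sum>x\<in>carrier G. P x $$ (i,i))"
    unfolding mat_trace_alt[OF Mc] by (simp add: M_def)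
  also have "\<dots> = (\<Sum>x\<in>carrier G. mat_trace (P x))"
    by (subst sum.swap) (simp add: mat_trace_alt[OF Pc])
  also have "\<dots> = of_nat (card (carrier G)) * mat_trace B" by (simp add: trP)
  finally have t1: "mat_trace M = of_nat (card (carrier G)) * mat_trace B" .
  have "mat_trace M = c * of_nat n" unfolding Mcc mat_trace_def by (simp add: mult.commute)
  hence cv: "c = of_nat (card (carrier G)) * mat_trace B / of_nat n" using t1 npos
    by (simp add: field_simps)
  have "(\<Sum>x\<in>carrier G. P x $$ (k,j)) = M $$ (k,j)" using k j by (simp add: M_def)
  also have "\<dots> = (if k = j then c else 0)" using k j Mcc by simp
  finally show ?thesis using cv unfolding P_def by simp
qed

lemma trace_mult_entries:
  assumes "C \<in> carrier_mat n n" "Q \<in> carrier_mat n n"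
  shows "mat_trace (C * Q) = (\<Sum>i<n. \<Sum>j<n. C $$ (i,j) * Q $$ (j,i))"
proof -
  have "C * Q \<in> carrier_mat n n" using assms by simp
  thus ?thesis unfolding mat_trace_alt[OF \<open>C * Q \<in> carrier_mat n n\<close>] using assms
    by (intro sum.cong refl mult_entry) auto
qed

lemma trace_avg:
  assumes C: "C \<in> carrier_mat n n" and B: "B \<in> carrier_mat n n"
  shows "(\<Sum>y\<in>carrier G. mat_trace (C * (\<rho> (inv y) * (B * \<rho> y))))
       = of_nat (card (carrier G)) * mat_trace B / of_nat n * mat_trace C"
proof -
  have "(\<Sum>y\<in>carrier G. mat_trace (C * (\<rho> (inv y) * (B * \<rho> y))))
     = (\<Sum>y\<in>carrier G. \<Sum>i<n. \<Sum>j<n. C $$ (i,j) * (\<rho> (inv y) * (B * \<rho> y)) $$ (j,i))"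
    using C B by (intro sum.cong refl trace_mult_entries) auto
  also have "\<dots> = (\<Sum>i<n. \<Sum>j<n. C $$ (i,j) * (\<Sum>y\<in>carrier G. (\<rho> (inv y) * (B * \<rho> y)) $$ (j,i)))"
    unfolding sum_distrib_left by (rule sum_swap3)
  also have "\<dots> = (\<Sum>i<n. \<Sum>j<n. C $$ (i,j) * (if j = i then of_nat (card (carrier G)) * mat_trace B / of_nat n else 0))"
    using B by (intro sum.cong refl) (simp add: avg)
  also have "\<dots> = (\<Sum>i<n. C $$ (i,i) * (of_nat (card (carrier G)) * mat_trace B / of_nat n))"
    by (simp add: if_distrib cong: if_cong)
  also have "\<dots> = of_nat (card (carrier G)) * mat_trace B / of_nat n * mat_trace C"
    unfolding mat_trace_alt[OF C] sum_distrib_right[symmetric] by (rule mult.commute)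
  finally show ?thesis .
qed

definition E :: "nat \<Rightarrow> nat \<Rightarrow> complex mat" where
  "E l i = mat n n (\<lambda>(a,b). if a = l \<and> b = i then 1 else 0)"

lemma E_carr[simp]: "E l i \<in> carrier_mat n n" by (simp add: E_def)

lemma E_trace: "l < n \<Longrightarrow> i < n \<Longrightarrow> mat_trace (E l i) = (if l = i then 1 else 0)"
  unfolding mat_trace_alt[OF E_carr] by (simp add: E_def)

lemma E_entry:
  assumes x: "x \<in> carrier G" and k: "k < n" and l: "l < n" and i: "i < n"
  shows "(\<rho> (inv x) * (E l i * \<rho> x)) $$ (k,i) = \<rho> (inv x) $$ (k,l) * \<rho> x $$ (i,i)"
proof -
  have e1: "(E l i * \<rho> x) $$ (a,i) = (if a = l then \<rho> x $$ (i,i) else 0)" if a: "a < n" for a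
  proof -
    have "(E l i * \<rho> x) $$ (a,i) = (\<Sum>k<n. E l i $$ (a,k) * \<rho> x $$ (k,i))"
      by (rule mult_entry[OF E_carr rho_carr[OF x] a i])
    also have "\<dots> = (\<Sum>k<n. if k = i then (if a = l then \<rho> x $$ (i,i) else 0) else 0)"
      using a l i by (intro sum.cong refl) (auto simp: E_def)
    also have "\<dots> = (if a = l then \<rho> x $$ (i,i) else 0)" using i by (simp add: sum.delta)
    finally show ?thesis .
  qed
  have "(\<rho> (inv x) * (E l i * \<rho> x)) $$ (k,i) = (\<Sum>a<n. \<rho> (inv x) $$ (k,a) * (E l i * \<rho> x) $$ (a,i))"
    using x k i by (intro mult_entry) auto
  also have "\<dots> = (\<Sum>a<n. if a = l then \<rho> (inv x) $$ (k,l) * \<rho> x $$ (i,i) else 0)"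
    by (intro sum.cong refl) (simp add: e1)
  also have "\<dots> = \<rho> (inv x) $$ (k,l) * \<rho> x $$ (i,i)"
    using l by (simp add: sum.delta)
  finally show ?thesis .
qed

lemma chi_sum:
  assumes k: "k < n" and l: "l < n"
  shows "(\<Sum>x\<in>carrier G. character \<rho> x * \<rho> (inv x) $$ (k,l))
       = (if k = l then of_nat (card (carrier G)) / of_nat n else 0)"
proof -
  have "(\<Sum>x\<in>carrier G. character \<rho> x * \<rho> (inv x) $$ (k,l))
      = (\<Sum>x\<in>carrier G. \<Sum>i<n. (\<rho> (inv x) * (E l i * \<rho> x)) $$ (k,i))"
  proof (intro sum.cong refl)
    fix x assume x: "x \<in> carrier G"
    show "character \<rho> x * \<rho> (inv x) $$ (k,l) = (\<Sum>i<n. (\<rho> (inv x) * (E l i * \<rho> x)) $$ (k,i))"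
      unfolding character_def mat_trace_alt[OF rho_carr[OF x]] sum_distrib_right
      using k l x by (simp add: E_entry mult.commute)
  qed
  also have "\<dots> = (\<Sum>i<n. \<Sum>x\<in>carrier G. (\<rho> (inv x) * (E l i * \<rho> x)) $$ (k,i))"
    by (rule sum.swap)
  also have "\<dots> = (\<Sum>i<n. if k = i then of_nat (card (carrier G)) * mat_trace (E l i) / of_nat n else 0)"
    using k by (intro sum.cong refl) (simp add: avg)
  also have "\<dots> = (if k = l then of_nat (card (carrier G)) / of_nat n else 0)"
    using k l by (simp add: E_trace)
  finally show ?thesis .
qed

lemma rho_comm:
  assumes g: "g \<in> carrier G" and x: "x \<in> carrier G" and y: "y \<in> carrier G"
  shows "\<rho> (g \<otimes> commutator G x y) = \<rho> (g \<otimes> inv x) * (\<rho> (inv y) * (\<rho> x * \<rho> y))"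
proof -
  have "g \<otimes> commutator G x y = (g \<otimes> inv x) \<otimes> (inv y \<otimes> (x \<otimes> y))"
    unfolding commutator_def using g x y by (simp add: m_assoc)
  thus ?thesis using g x y by (simp add: rho_mult)
qed

lemma comm_sum:
  assumes g: "g \<in> carrier G"
  shows "(\<Sum>x\<in>carrier G. \<Sum>y\<in>carrier G. character \<rho> (g \<otimes> commutator G x y))
       = of_nat (card (carrier G)) ^ 2 * character \<rho> g / of_nat n ^ 2"
proof -
  let ?N = "of_nat (card (carrier G)) :: complex"
  have "(\<Sum>x\<in>carrier G. \<Sum>y\<in>carrier G. character \<rho> (g \<otimes> commutator G x y))
      = (\<Sum>x\<in>carrier G. ?N * character \<rho> x / of_nat n * mat_trace (\<rho> g * \<rho> (inv x)))"
  proof (intro sum.cong refl)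
    fix x assume x: "x \<in> carrier G"
    have "(\<Sum>y\<in>carrier G. character \<rho> (g \<otimes> commutator G x y))
       = (\<Sum>y\<in>carrier G. mat_trace (\<rho> (g \<otimes> inv x) * (\<rho> (inv y) * (\<rho> x * \<rho> y))))"
      using g x by (intro sum.cong refl) (simp add: character_def rho_comm)
    also have "\<dots> = ?N * mat_trace (\<rho> x) / of_nat n * mat_trace (\<rho> (g \<otimes> inv x))"
      using g x by (intro trace_avg) auto
    finally show "(\<Sum>y\<in>carrier G. character \<rho> (g \<otimes> commutator G x y))
       = ?N * character \<rho> x / of_nat n * mat_trace (\<rho> g * \<rho> (inv x))"
      using g x by (simp add: character_def rho_mult)
  qed
  also have "\<dots> = ?N / of_nat n * (\<Sum>x\<in>carrier G. character \<rho> x * mat_trace (\<rho> g * \<rho> (inv x)))"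
    by (simp add: sum_distrib_left mult_ac)
  also have "(\<Sum>x\<in>carrier G. character \<rho> x * mat_trace (\<rho> g * \<rho> (inv x)))
     = (\<Sum>x\<in>carrier G. \<Sum>i<n. \<Sum>j<n. \<rho> g $$ (i,j) * (character \<rho> x * \<rho> (inv x) $$ (j,i)))"
    using g by (intro sum.cong refl) (simp add: trace_mult_entries sum_distrib_left mult_ac)
  also have "\<dots> = (\<Sum>i<n. \<Sum>j<n. \<rho> g $$ (i,j) * (\<Sum>x\<in>carrier G. character \<rho> x * \<rho> (inv x) $$ (j,i)))"
    unfolding sum_distrib_left by (rule sum_swap3)
  also have "\<dots> = (\<Sum>i<n. \<Sum>j<n. \<rho> g $$ (i,j) * (if j = i then ?N / of_nat n else 0))"
    by (intro sum.cong refl) (simp add: chi_sum)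
  also have "\<dots> = (\<Sum>i<n. \<rho> g $$ (i,i) * (?N / of_nat n))"
    by (simp add: if_distrib cong: if_cong)
  also have "\<dots> = ?N / of_nat n * character \<rho> g"
    unfolding character_def mat_trace_alt[OF rho_carr[OF g]] sum_distrib_right[symmetric] by (rule mult.commute)
  finally show ?thesis by (simp add: power2_eq_square)
qed

lemma rho_pow: assumes k: "k \<in> carrier G" shows "\<rho> k ^\<^sub>m m = \<rho> (k [^] m)"
  using carrier_matD[OF rho_carr[OF k]] by (induction m) (simp_all add: rho_mult k)

lemma eig_norm:
  assumes k: "k \<in> carrier G" and ev: "eigenvalue (\<rho> k) e"
  shows "cmod e = 1"
proof -
  obtain v where v: "eigenvector (\<rho> k) v e" using ev unfolding eigenvalue_def by blast
  define m where "m = Coset.order G"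
  have m: "m > 0" unfolding m_def Coset.order_def using fin one_closed card_gt_0_iff by blast
  have "\<rho> k ^\<^sub>m m *\<^sub>v v = e ^ m \<cdot>\<^sub>v v" by (rule eigenvector_pow[OF rho_carr[OF k] v])
  moreover have "\<rho> k ^\<^sub>m m = 1\<^sub>m n" unfolding rho_pow[OF k] m_def using k pow_order_eq_1 by simp
  moreover have vc: "v \<in> carrier_vec n" "v \<noteq> 0\<^sub>v n" using v rho_carr[OF k] unfolding eigenvector_def by auto
  ultimately have eq: "v = e ^ m \<cdot>\<^sub>v v" by simp
  have "\<exists>i<n. v $ i \<noteq> 0"
  proof (rule ccontr)
    assume "\<not> (\<exists>i<n. v $ i \<noteq> 0)"
    hence "v = 0\<^sub>v n" using vc(1) by (intro eq_vecI) auto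
    thus False using vc(2) by simp
  qed
  then obtain i where i: "i < n" "v $ i \<noteq> 0" by blast
  have "v $ i = e ^ m * v $ i" using arg_cong[OF eq, of "\<lambda>w. w $ i"] i vc by simp
  hence em: "e ^ m = 1" using i by simp
  have "cmod (e ^ m) = 1" using em by simp
  hence "cmod e ^ m = 1 ^ m" by (simp add: norm_power)
  thus ?thesis using power_eq_iff_eq_base[OF m norm_ge_zero[of e] zero_le_one] by simp
qed

lemma re_chi_lower:
  assumes k: "k \<in> carrier G"
  shows "- real n \<le> Re (character \<rho> k)"
  unfolding character_def using trace_lower_gen[OF rho_carr[OF k]] eig_norm[OF k] by blast

lemma comm_inv:
  assumes x: "x \<in> carrier G" and y: "y \<in> carrier G"
  shows "commutator G y x = inv (commutator G x y)"
  unfolding commutator_def using x y by (simp add: inv_mult_group m_assoc)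

lemma chi_one: "character \<rho> \<one> = of_nat n"
  unfolding character_def mat_trace_def by simp

lemma count_bound:
  assumes g: "g \<in> carrier G"
  shows "comm_count G g \<le> (1 + Re (character \<rho> g) / real n ^ 3) / 2"
proof -
  define C where "C = real (card (carrier G))"
  define P where "P = (\<lambda>(x,y). commutator G x y = g)"
  define S where "S = {(x, y). x \<in> carrier G \<and> y \<in> carrier G \<and> commutator G x y = g}"
  define N where "N = real (card S)"
  define R where "R = Re (character \<rho> g)"
  have Cpos: "C > 0" unfolding C_def using fin one_closed card_gt_0_iff by fastforce
  have SS: "S = {p \<in> carrier G \<times> carrier G. P p}" unfolding S_def P_def by auto
  have sw: "(\<Sum>x\<in>carrier G. \<Sum>y\<in>carrier G. character \<rho> (g \<otimes> commutator G y x))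
       = of_nat (card (carrier G)) ^ 2 * character \<rho> g / of_nat n ^ 2"
  proof -
    have "(\<Sum>x\<in>carrier G. \<Sum>y\<in>carrier G. character \<rho> (g \<otimes> commutator G y x))
        = (\<Sum>y\<in>carrier G. \<Sum>x\<in>carrier G. character \<rho> (g \<otimes> commutator G y x))"
      by (rule sum.swap)
    also have "\<dots> = of_nat (card (carrier G)) ^ 2 * character \<rho> g / of_nat n ^ 2"
      by (rule comm_sum[OF g])
    finally show ?thesis .
  qed
  hence "Re (\<Sum>x\<in>carrier G. \<Sum>y\<in>carrier G. character \<rho> (g \<otimes> commutator G y x))
       = C ^ 2 * R / real n ^ 2" unfolding C_def R_def
    by (simp add: Re_divide_of_nat)
  hence reS: "(\<Sum>x\<in>carrier G. \<Sum>y\<in>carrier G. Re (character \<rho> (g \<otimes> commutator G y x)))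
       = C ^ 2 * R / real n ^ 2" by (simp add: Re_sum)
  have lb: "(if P (x,y) then real n else - real n) \<le> Re (character \<rho> (g \<otimes> commutator G y x))"
    if x: "x \<in> carrier G" and y: "y \<in> carrier G" for x y
  proof (cases "P (x,y)")
    case True
    hence "commutator G x y = g" unfolding P_def by simp
    hence "g \<otimes> commutator G y x = \<one>" using comm_inv[OF x y] g by simp
    thus ?thesis using True by (simp add: chi_one)
  next
    case False
    thus ?thesis using re_chi_lower[of "g \<otimes> commutator G y x"] g x y
      by (simp add: commutator_def)
  qed
  have "(\<Sum>x\<in>carrier G. \<Sum>y\<in>carrier G. (if P (x,y) then real n else - real n))
     \<le> (\<Sum>x\<in>carrier G. \<Sum>y\<in>carrier G. Re (character \<rho> (g \<otimes> commutator G y x)))"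
    using lb by (intro sum_mono) auto
  also have "(\<Sum>x\<in>carrier G. \<Sum>y\<in>carrier G. (if P (x,y) then real n else - real n))
     = (\<Sum>p\<in>carrier G \<times> carrier G. (if P p then real n else - real n))"
    by (simp add: sum.cartesian_product)
  also have "\<dots> = (\<Sum>p\<in>carrier G \<times> carrier G. 2 * real n * (if P p then 1 else 0) - real n)"
    by (intro sum.cong refl) auto
  also have "\<dots> = 2 * real n * (\<Sum>p\<in>carrier G \<times> carrier G. (if P p then 1 else 0)) - real n * C ^ 2"
    by (simp add: sum_subtractf sum_distrib_left C_def card_cartesian_product power2_eq_square)
  also have "(\<Sum>p\<in>carrier G \<times> carrier G. (if P p then 1 else 0)) = N"
    unfolding N_def SS using fin by (simp add: sum.inter_filter[symmetric])
  finally have h: "2 * real n * N - real n * C ^ 2 \<le> C ^ 2 * R / real n ^ 2" using reS by simp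
  have np: "real n > 0" using npos by simp
  have h2: "2 * N - C ^ 2 \<le> C ^ 2 * R / real n ^ 3"
  proof -
    have "real n * (2 * N - C ^ 2) \<le> real n * (C ^ 2 * R / real n ^ 3)"
      using h np by (simp add: field_simps power3_eq_cube power2_eq_square)
    thus ?thesis using mult_le_cancel_left_pos[OF np] by blast
  qed
  have "comm_count G g = N / C ^ 2" unfolding comm_count_def N_def C_def S_def by simp
  also have "\<dots> \<le> (1 + R / real n ^ 3) / 2"
    using h2 Cpos by (simp add: field_simps)
  finally show ?thesis unfolding R_def .
qed

end

theorem corollary3:
  fixes G :: "('g, 'b) monoid_scheme" and n :: nat and \<rho> :: "'g \<Rightarrow> complex mat"
  assumes "group G" and "finite (carrier G)"
    and "irreducible_representation G n \<rho>"
  shows "(\<forall>g\<in>carrier G. comm_count G g \<le> (1 + Re (character \<rho> g) / real n ^ 3) / 2)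
         \<and> comm_prob G \<le> (1 + 1 / real n ^ 2) / 2"
proof -
  interpret irrep G n \<rho> using assms by (simp add: irrep_def irrep_axioms_def)
  have A: "\<forall>g\<in>carrier G. comm_count G g \<le> (1 + Re (character \<rho> g) / real n ^ 3) / 2"
    using count_bound by blast
  have "comm_prob G \<le> (1 + Re (character \<rho> \<one>\<^bsub>G\<^esub>) / real n ^ 3) / 2"
    unfolding comm_prob_def using count_bound by simp
  also have "Re (character \<rho> \<one>\<^bsub>G\<^esub>) / real n ^ 3 = 1 / real n ^ 2"
    using npos by (simp add: chi_one power3_eq_cube power2_eq_square)
  finally show ?thesis using A by simp
qed

end
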